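(* Let $\delta:(0,\infty)\to(0,\tfrac14)$ be a function with $\delta(\varepsilon)\to0$ as $\varepsilon\to0^+$. For every $\alpha\in(0,1)$ there exist $r=r(\alpha)>0$ and $\bar\varepsilon_2>0$ (depending only on $\alpha$ and $\delta$) such that: if $E\subseteq\mathbb{R}^2$ is convex with $B_{1-\delta(\varepsilon)}\subseteq E\subseteq B_{1+\delta(\varepsilon)}$ for some $0<\varepsilon<\bar\varepsilon_2$, then \[ \left\{y\in B_r(x):\ \frac{x-y}{|x-y|}\cdot\nu_E(x)\ge\alpha\right\}\subseteq E\qquad\text{for }\mathcal{H}^1\text{-a.e. }x\in\partial E, \] where $\nu_E(x)$ is the outer unit normal to $E$ at $x$.
   Context: $B_r(x)$ is the open ball of radius $r$ centered at $x$ in $\mathbb{R}^2$, and $B_r=B_r(0)$. For a convex set $E$ the outer unit normal $\nu_E(x)$ exists for $\mathcal{H}^1$-a.e. $x\in\partial E$. *)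

theory Defs
  imports "HOL-Analysis.Analysis"
begin

definition H1_null :: "(real^2) set \<Rightarrow> bool" where
  "H1_null S \<longleftrightarrow> (\<forall>e>0. \<exists>C :: nat \<Rightarrow> (real^2) set.
      S \<subseteq> (\<Union>n. C n) \<and> (\<forall>n. bounded (C n)) \<and>
      summable (\<lambda>n. diameter (C n)) \<and> (\<Sum>n. diameter (C n)) < e)"

definition H1_ae_on :: "(real^2) set \<Rightarrow> (real^2 \<Rightarrow> bool) \<Rightarrow> bool" where
  "H1_ae_on S P \<longleftrightarrow> H1_null {x \<in> S. \<not> P x}"

definition outer_normal :: "(real^2) set \<Rightarrow> real^2 \<Rightarrow> real^2 \<Rightarrow> bool" where
  "outer_normal E x \<nu> \<longleftrightarrow> norm \<nu> = 1 \<and> (\<forall>y\<in>E. (y - x) \<bullet> \<nu> \<le> 0)"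

text \<open>The outer unit normal nu_E(x), meaningful where it is unique.\<close>
definition nu :: "(real^2) set \<Rightarrow> real^2 \<Rightarrow> real^2" where
  "nu E x = (THE \<nu>. outer_normal E x \<nu>)"

end

theory Submission
  imports Defs
begin

lemma cone_lemma:
  fixes E :: "(real^2) set" and x y \<nu> :: "real^2"
  assumes cE: "convex E" and d: "0 < d" "d < 1/4" "d < \<alpha>^2/64" and a: "0 < \<alpha>" "\<alpha> < 1"
    and inE: "ball 0 (1 - d) \<subseteq> E" and Eout: "E \<subseteq> ball 0 (1 + d)"
    and xf: "x \<in> frontier E" and nx: "outer_normal E x \<nu>"
    and yb: "y \<in> ball x (\<alpha>/2)" and yx: "y \<noteq> x"
    and cone: "(inverse (norm (x - y)) *\<^sub>R (x - y)) \<bullet> \<nu> \<ge> \<alpha>"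
  shows "y \<in> E"
proof -
  have n1: "norm \<nu> = 1" and nE: "\<And>z. z \<in> E \<Longrightarrow> (z - x) \<bullet> \<nu> \<le> 0"
    using nx by (auto simp: outer_normal_def)
  have nn: "\<nu> \<bullet> \<nu> = 1" using n1 by (simp add: norm_eq_1)
  define v where "v = y - x"
  define t where "t = norm v"
  have t0: "0 < t" using yx by (simp add: t_def v_def)
  have ts: "t < \<alpha>/2" using yb by (simp add: t_def v_def dist_norm norm_minus_commute)
  have vv: "v \<bullet> v = t^2" by (simp add: t_def power2_norm_eq_inner)
  have "(inverse t *\<^sub>R (- v)) \<bullet> \<nu> \<ge> \<alpha>" using cone
    by (simp add: t_def v_def norm_minus_commute)
  hence "- (v \<bullet> \<nu>) / t \<ge> \<alpha>" by (simp add: inner_commute divide_inverse mult.commute)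
  hence vn: "v \<bullet> \<nu> \<le> - \<alpha> * t" using t0 by (simp add: field_simps)
  define a where "a = x \<bullet> \<nu>"
  have "(1 - 2*d) *\<^sub>R \<nu> \<in> E" using inE d n1 by (auto simp: dist_norm)
  from nE[OF this] have a1: "a \<ge> 1 - 2*d" using nn by (simp add: a_def inner_diff_left algebra_simps)
  have "x \<in> closure E" using xf by (simp add: frontier_def)
  hence "x \<in> cball 0 (1+d)" using Eout closure_mono[OF Eout] closure_ball[of 0 "1+d"] d by auto
  hence xn: "norm x \<le> 1 + d" by simp
  have "0 \<le> d*d" by simp
  define m where "m = norm (x - a *\<^sub>R \<nu>)"
  have "m^2 = x \<bullet> x - a^2"
    unfolding m_def power2_norm_eq_inner using nn
    by (simp add: inner_diff_left inner_diff_right a_def inner_commute power2_eq_square algebra_simps)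
  also have "x \<bullet> x \<le> (1+d)^2" using xn d
    by (metis norm_ge_zero power2_norm_eq_inner power_mono)
  hence "x \<bullet> x - a^2 \<le> (1+d)^2 - (1-2*d)^2"
    using power_mono[OF a1, of 2] d by linarith
  finally have m2: "m^2 \<le> (1+d)^2 - (1-2*d)^2" .
  have "(1+d)^2 - (1-2*d)^2 = 6*d - 3*d^2" by (simp add: power2_eq_square algebra_simps)
  moreover have "(\<alpha>/3)^2 = \<alpha>^2/9" by (simp add: power_divide)
  moreover have "0 \<le> d^2" by simp
  ultimately have "m^2 < (\<alpha>/3)^2" using m2 d by linarith
  hence m3: "m < \<alpha>/3" by (rule power_less_imp_less_base) (use a in auto)
  have e1: "x \<bullet> v = a * (v \<bullet> \<nu>) + (x - a *\<^sub>R \<nu>) \<bullet> v"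
    by (simp add: inner_diff_left inner_commute[of \<nu> v])
  have e2: "(x - a *\<^sub>R \<nu>) \<bullet> v \<le> m * t"
    unfolding m_def t_def by (rule norm_cauchy_schwarz)
  have e3: "a * (v \<bullet> \<nu>) \<le> a * (- \<alpha> * t)"
    using vn a1 d by (intro mult_left_mono) auto
  have xv: "x \<bullet> v \<le> a * (- \<alpha> * t) + m * t" using e1 e2 e3 by linarith
  define s where "s = \<alpha>/2"
  define z where "z = x + (s/t) *\<^sub>R v"
  have zz: "z \<bullet> z = x \<bullet> x + 2*(s/t)*(x \<bullet> v) + s^2"
    using vv t0 by (simp add: z_def inner_add_left inner_add_right inner_commute power2_eq_square algebra_simps)
  have "2*(s/t)*(x \<bullet> v) \<le> 2*(s/t)*(a * (- \<alpha> * t) + m * t)"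
    using xv t0 a by (intro mult_left_mono) (auto simp: s_def)
  also have "\<dots> = \<alpha> * (- a * \<alpha> + m)" using t0 by (simp add: s_def field_simps)
  finally have zz2: "z \<bullet> z \<le> (1+d)^2 + \<alpha> * (- a * \<alpha> + m) + s^2"
    using zz \<open>x \<bullet> x \<le> (1+d)^2\<close> by linarith
  have "(1 - 2*d) * \<alpha> \<le> a * \<alpha>" using a1 a by (intro mult_right_mono) auto
  hence "- a * \<alpha> + m \<le> - (1 - 2*d) * \<alpha> + \<alpha>/3" using m3 by linarith
  hence "\<alpha> * (- a * \<alpha> + m) \<le> \<alpha> * (- (1 - 2*d) * \<alpha> + \<alpha>/3)" using a by (intro mult_left_mono) auto
  moreover have "s^2 = \<alpha>^2/4" by (simp add: s_def power_divide)
  moreover have "d * \<alpha>^2 \<le> d" using d a by (simp add: power_le_one)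
  moreover have "\<alpha> * (- (1 - 2*d) * \<alpha> + \<alpha>/3) = - (2/3) * \<alpha>^2 + 2 * (d * \<alpha>^2)"
    by (simp add: power2_eq_square algebra_simps)
  moreover have "(1+d)^2 = 1 + 2*d + d^2" "(1-d)^2 = 1 - 2*d + d^2" by (simp_all add: power2_eq_square algebra_simps)
  ultimately have "z \<bullet> z < (1-d)^2" using zz2 d by linarith
  hence "norm z ^ 2 < (1-d)^2" by (simp add: power2_norm_eq_inner)
  hence "norm z < 1 - d" by (rule power_less_imp_less_base) (use d in auto)
  hence "z \<in> interior E" using inE interior_maximal[OF inE] by (auto simp: dist_norm)
  moreover have "y \<in> open_segment z x"
    unfolding in_segment
  proof (intro conjI exI)
    show "z \<noteq> x" using t0 a by (simp add: z_def s_def t_def)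
    show "0 < 1 - t/s" "1 - t/s < 1" using t0 ts by (auto simp: s_def)
    show "y = (1 - (1 - t/s)) *\<^sub>R z + (1 - t/s) *\<^sub>R x"
      using t0 a by (simp add: z_def s_def v_def algebra_simps)
  qed
  ultimately have "y \<in> interior E"
    using in_interior_closure_convex_segment[OF cE] \<open>x \<in> closure E\<close> by blast
  thus ?thesis using interior_subset by blast
qed


lemma countable_H1_null: "countable S \<Longrightarrow> H1_null S"
proof -
  assume "countable S"
  hence c: "countable (insert 0 S)" by simp
  define f where "f = from_nat_into (insert 0 S)"
  have "range f = insert 0 S" unfolding f_def using c by (simp add: range_from_nat_into)
  hence "S \<subseteq> (\<Union>n. {f n})" by auto
  thus ?thesis unfolding H1_null_def
    by (intro allI impI exI[of _ "\<lambda>n. {f n}"]) auto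
qed

definition NC :: "(real^2) set \<Rightarrow> real^2 \<Rightarrow> (real^2) set" where
  "NC E x = {\<mu>. \<forall>y\<in>E. (y - x) \<bullet> \<mu> \<le> 0}"

lemma NC_closure: "\<mu> \<in> NC E x \<Longrightarrow> y \<in> closure E \<Longrightarrow> (y - x) \<bullet> \<mu> \<le> 0"
proof -
  assume "\<mu> \<in> NC E x" "y \<in> closure E"
  have "E \<subseteq> {y. \<mu> \<bullet> y \<le> \<mu> \<bullet> x}" using \<open>\<mu> \<in> NC E x\<close>
    by (auto simp: NC_def inner_diff_left inner_commute[of \<mu>])
  hence "closure E \<subseteq> {y. \<mu> \<bullet> y \<le> \<mu> \<bullet> x}"
    by (intro closure_minimal) (auto simp: closed_halfspace_le)
  thus ?thesis using \<open>y \<in> closure E\<close> by (auto simp: inner_diff_left inner_commute[of \<mu>])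
qed

lemma NC_disj:
  assumes "x \<in> closure E" "x' \<in> closure E" "x \<noteq> x'"
  shows "interior (NC E x) \<inter> NC E x' = {}"
proof (rule ccontr)
  assume "interior (NC E x) \<inter> NC E x' \<noteq> {}"
  then obtain \<mu> where m1: "\<mu> \<in> interior (NC E x)" and m2: "\<mu> \<in> NC E x'" by auto
  obtain e where e: "e > 0" "ball \<mu> e \<subseteq> NC E x" using m1 by (meson mem_interior)
  define w where "w = x' - x"
  have w0: "norm w > 0" using assms by (simp add: w_def)
  define k where "k = e / (2 * norm w)"
  have k0: "k > 0" using e w0 by (simp add: k_def)
  have "dist \<mu> (\<mu> + k *\<^sub>R w) = e/2" using w0 e by (simp add: dist_norm k_def)
  hence "\<mu> + k *\<^sub>R w \<in> NC E x" using e by auto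
  from NC_closure[OF this assms(2)] have "w \<bullet> \<mu> + k * (w \<bullet> w) \<le> 0"
    by (simp add: w_def inner_add_right)
  moreover have "(x - x') \<bullet> \<mu> \<le> 0" using NC_closure[OF m2 assms(1)] .
  hence "w \<bullet> \<mu> \<ge> 0" by (simp add: w_def inner_diff_left)
  moreover have "w \<bullet> w > 0" using w0 by simp
  ultimately show False using k0 by (smt (verit) mult_pos_pos)
qed

lemma NC_convex: "convex (NC E x)"
  unfolding NC_def convex_def
proof (intro allI impI ballI CollectI)
  fix a b :: "real^2" and u v :: real and y
  assume "a \<in> {\<mu>. \<forall>y\<in>E. (y - x) \<bullet> \<mu> \<le> 0}" "b \<in> {\<mu>. \<forall>y\<in>E. (y - x) \<bullet> \<mu> \<le> 0}"
    "0 \<le> u" "0 \<le> v" "u + v = 1" "y \<in> E"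
  hence "(y - x) \<bullet> a \<le> 0" "(y - x) \<bullet> b \<le> 0" by auto
  hence "u * ((y - x) \<bullet> a) + v * ((y - x) \<bullet> b) \<le> 0"
    using \<open>0 \<le> u\<close> \<open>0 \<le> v\<close> by (smt (verit) mult_nonneg_nonneg mult_minus_right)
  thus "(y - x) \<bullet> (u *\<^sub>R a + v *\<^sub>R b) \<le> 0" by (simp add: inner_add_right)
qed



lemma normal_exists:
  assumes cE: "convex E" and ie: "interior E \<noteq> {}" and xf: "x \<in> frontier E"
  shows "\<exists>\<nu>. outer_normal E x \<nu>"
proof -
  have "x \<in> closure E" "x \<notin> rel_interior E" using xf ie rel_interior_nonempty_interior[OF ie]
    by (auto simp: frontier_def)
  then obtain a where a: "a \<noteq> 0" "\<And>y. y \<in> closure E \<Longrightarrow> a \<bullet> x \<le> a \<bullet> y"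
    using supporting_hyperplane_relative_frontier[OF cE] by metis
  define \<nu> where "\<nu> = - (inverse (norm a)) *\<^sub>R a"
  have "outer_normal E x \<nu>" unfolding outer_normal_def
  proof (intro conjI ballI)
    show "norm \<nu> = 1" using a by (simp add: \<nu>_def)
    fix y assume "y \<in> E"
    hence "a \<bullet> x \<le> a \<bullet> y" using a closure_subset by blast
    hence "0 \<le> inverse (norm a) * (a \<bullet> y - a \<bullet> x)" by simp
    thus "(y - x) \<bullet> \<nu> \<le> 0" by (simp add: \<nu>_def inner_diff_left inner_commute[of a] algebra_simps)
  qed
  thus ?thesis by blast
qed

lemma corner_interior:
  assumes cE: "convex E" and r: "0 < \<rho>" "ball 0 \<rho> \<subseteq> E"
    and n1: "outer_normal E x \<nu>1" and n2: "outer_normal E x \<nu>2" and ne: "\<nu>1 \<noteq> \<nu>2"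
  shows "interior (NC E x) \<noteq> {}"
proof -
  have u1: "norm \<nu>1 = 1" and u2: "norm \<nu>2 = 1" using n1 n2 by (auto simp: outer_normal_def)
  have N1: "\<nu>1 \<in> NC E x" and N2: "\<nu>2 \<in> NC E x" using n1 n2 by (auto simp: outer_normal_def NC_def)
  have N0: "0 \<in> NC E x" by (simp add: NC_def)
  have sub: "convex hull {0, \<nu>1, \<nu>2} \<subseteq> NC E x"
    using N0 N1 N2 NC_convex by (intro hull_minimal) auto
  have nsp: "\<nu>1 \<notin> span {\<nu>2}"
  proof
    assume "\<nu>1 \<in> span {\<nu>2}"
    then obtain c where c: "\<nu>1 = c *\<^sub>R \<nu>2" by (auto simp: span_singleton)
    hence "\<bar>c\<bar> = 1" using u1 u2 by simp
    hence "c = 1 \<or> c = -1" by linarith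
    moreover have "c \<noteq> 1" using c ne by auto
    ultimately have c1: "\<nu>1 = - \<nu>2" using c by simp
    have h: "\<And>y. y \<in> E \<Longrightarrow> (y - x) \<bullet> \<nu>2 = 0"
    proof -
      fix y assume "y \<in> E"
      hence "(y - x) \<bullet> \<nu>1 \<le> 0" "(y - x) \<bullet> \<nu>2 \<le> 0" using n1 n2 by (auto simp: outer_normal_def)
      thus "(y - x) \<bullet> \<nu>2 = 0" using c1 by simp
    qed
    have "0 \<in> E" "(\<rho>/2) *\<^sub>R \<nu>2 \<in> E" using r u2 by (auto simp: dist_norm)
    from h[OF this(1)] h[OF this(2)] have "(\<rho>/2) * (\<nu>2 \<bullet> \<nu>2) = 0"
      by (simp add: inner_diff_left)
    moreover have "\<nu>2 \<bullet> \<nu>2 = 1" using u2 by (simp add: norm_eq_1)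
    ultimately show False using r by simp
  qed
  have "\<nu>1 \<noteq> 0" "\<nu>2 \<noteq> 0" using u1 u2 by auto
  have ind: "independent {\<nu>1, \<nu>2}"
    using nsp ne \<open>\<nu>2 \<noteq> 0\<close> by (simp add: independent_insert)
  have "\<not> affine_dependent {0, \<nu>1, \<nu>2}"
    using affine_dependent_iff_dependent[of 0 "{\<nu>1, \<nu>2}"] ind \<open>\<nu>1 \<noteq> 0\<close> \<open>\<nu>2 \<noteq> 0\<close> by simp
  moreover have "card {0, \<nu>1, \<nu>2} = Suc DIM(real^2)"
    using \<open>\<nu>1 \<noteq> 0\<close> \<open>\<nu>2 \<noteq> 0\<close> ne by simp
  ultimately have "interior (convex hull {0, \<nu>1, \<nu>2}) \<noteq> {}"
    using interior_convex_hull_eq_empty by blast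
  thus ?thesis using interior_mono[OF sub] by blast
qed



lemma bad_countable:
  assumes cE: "convex E" and r: "0 < \<rho>" "ball 0 \<rho> \<subseteq> E"
  shows "countable {x \<in> frontier E. \<not> (\<exists>!\<nu>. outer_normal E x \<nu>)}" (is "countable ?B")
proof -
  have ie: "interior E \<noteq> {}" using interior_maximal[OF r(2)] r(1) by (auto intro: exI[of _ 0])
  have ne: "interior (NC E x) \<noteq> {}" if "x \<in> ?B" for x
  proof -
    from that have xf: "x \<in> frontier E" and nu: "\<not> (\<exists>!\<nu>. outer_normal E x \<nu>)" by auto
    obtain \<nu> where "outer_normal E x \<nu>" using normal_exists[OF cE ie xf] by blast
    with nu obtain \<nu>' where "outer_normal E x \<nu>'" "\<nu>' \<noteq> \<nu>" by blast
    thus ?thesis using corner_interior[OF cE r] \<open>outer_normal E x \<nu>\<close> by blast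
  qed
  define f where "f = (\<lambda>x. interior (NC E x))"
  have dj: "f x \<inter> f x' = {}" if "x \<in> ?B" "x' \<in> ?B" "x \<noteq> x'" for x x'
    using NC_disj[of x E x'] that interior_subset[of "NC E x'"] by (auto simp: f_def frontier_def)
  have "countable (f ` ?B)"
  proof (rule countable_disjoint_open_subsets)
    show "open S" if "S \<in> f ` ?B" for S using that by (auto simp: f_def)
    show "pairwise disjnt (f ` ?B)"
      unfolding pairwise_def disjnt_def using dj by blast
  qed
  moreover have "inj_on f ?B"
  proof (rule inj_onI)
    fix x x' assume "x \<in> ?B" "x' \<in> ?B" "f x = f x'"
    thus "x = x'" using dj[of x x'] ne[of x] by (auto simp: f_def)
  qed
  ultimately show ?thesis by (rule countable_image_inj_on)
qed


theorem lemma3p9: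
  fixes \<delta> :: "real \<Rightarrow> real"
  assumes "\<forall>\<epsilon>>0. 0 < \<delta> \<epsilon> \<and> \<delta> \<epsilon> < 1/4"
    and "(\<delta> \<longlongrightarrow> 0) (at_right 0)"
  shows "\<forall>\<alpha>. 0 < \<alpha> \<and> \<alpha> < 1 \<longrightarrow>
    (\<exists>r>0. \<exists>\<epsilon>2>0. \<forall>\<epsilon> E. 0 < \<epsilon> \<and> \<epsilon> < \<epsilon>2 \<and> convex (E :: (real^2) set) \<and>
        ball 0 (1 - \<delta> \<epsilon>) \<subseteq> E \<and> E \<subseteq> ball 0 (1 + \<delta> \<epsilon>) \<longrightarrow>
        H1_ae_on (frontier E) (\<lambda>x. (\<exists>!\<nu>. outer_normal E x \<nu>) \<and>
          {y \<in> ball x r. y \<noteq> x \<and> (inverse (norm (x - y)) *\<^sub>R (x - y)) \<bullet> nu E x \<ge> \<alpha>} \<subseteq> E))"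
proof (intro allI impI)
  fix \<alpha> :: real assume a: "0 < \<alpha> \<and> \<alpha> < 1"
  have "0 < \<alpha>^2/64" using a by simp
  from order_tendstoD(2)[OF assms(2) this]
  obtain b where b: "b > 0" "\<And>\<epsilon>. 0 < \<epsilon> \<Longrightarrow> \<epsilon> < b \<Longrightarrow> \<delta> \<epsilon> < \<alpha>^2/64"
    by (auto simp: eventually_at_right_field)
  show "\<exists>r>0. \<exists>\<epsilon>2>0. \<forall>\<epsilon> E. 0 < \<epsilon> \<and> \<epsilon> < \<epsilon>2 \<and> convex (E :: (real^2) set) \<and>
        ball 0 (1 - \<delta> \<epsilon>) \<subseteq> E \<and> E \<subseteq> ball 0 (1 + \<delta> \<epsilon>) \<longrightarrow>
        H1_ae_on (frontier E) (\<lambda>x. (\<exists>!\<nu>. outer_normal E x \<nu>) \<and>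
          {y \<in> ball x r. y \<noteq> x \<and> (inverse (norm (x - y)) *\<^sub>R (x - y)) \<bullet> nu E x \<ge> \<alpha>} \<subseteq> E)"
  proof (rule exI[of _ "\<alpha>/2"], rule conjI, use a in simp, rule exI[of _ b], rule conjI, rule b(1), intro allI impI)
    fix \<epsilon> and E :: "(real^2) set"
    assume H: "0 < \<epsilon> \<and> \<epsilon> < b \<and> convex E \<and> ball 0 (1 - \<delta> \<epsilon>) \<subseteq> E \<and> E \<subseteq> ball 0 (1 + \<delta> \<epsilon>)"
    have d: "0 < \<delta> \<epsilon>" "\<delta> \<epsilon> < 1/4" "\<delta> \<epsilon> < \<alpha>^2/64" using H assms(1) b(2) by auto
    have sub: "{x \<in> frontier E. \<not> ((\<exists>!\<nu>. outer_normal E x \<nu>) \<and>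
          {y \<in> ball x (\<alpha>/2). y \<noteq> x \<and> (inverse (norm (x - y)) *\<^sub>R (x - y)) \<bullet> nu E x \<ge> \<alpha>} \<subseteq> E)}
       \<subseteq> {x \<in> frontier E. \<not> (\<exists>!\<nu>. outer_normal E x \<nu>)}"
    proof
      fix x assume xm: "x \<in> {x \<in> frontier E. \<not> ((\<exists>!\<nu>. outer_normal E x \<nu>) \<and>
          {y \<in> ball x (\<alpha>/2). y \<noteq> x \<and> (inverse (norm (x - y)) *\<^sub>R (x - y)) \<bullet> nu E x \<ge> \<alpha>} \<subseteq> E)}"
      hence xf: "x \<in> frontier E"
        and nt: "\<not> ((\<exists>!\<nu>. outer_normal E x \<nu>) \<and>
          {y \<in> ball x (\<alpha>/2). y \<noteq> x \<and> (inverse (norm (x - y)) *\<^sub>R (x - y)) \<bullet> nu E x \<ge> \<alpha>} \<subseteq> E)"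
        by auto
      show "x \<in> {x \<in> frontier E. \<not> (\<exists>!\<nu>. outer_normal E x \<nu>)}"
      proof (rule ccontr)
      assume "x \<notin> {x \<in> frontier E. \<not> (\<exists>!\<nu>. outer_normal E x \<nu>)}"
      hence u: "\<exists>!\<nu>. outer_normal E x \<nu>" using xf by blast
      have on: "outer_normal E x (nu E x)" unfolding nu_def using u by (rule theI')
      have "{y \<in> ball x (\<alpha>/2). y \<noteq> x \<and> (inverse (norm (x - y)) *\<^sub>R (x - y)) \<bullet> nu E x \<ge> \<alpha>} \<subseteq> E"
        using cone_lemma[OF _ d _ _ _ _ xf on] H a by blast
      thus False using nt u by blast
      qed
    qed
    have "countable {x \<in> frontier E. \<not> (\<exists>!\<nu>. outer_normal E x \<nu>)}"
      using bad_countable[of E "1 - \<delta> \<epsilon>"] H d by auto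
    hence "countable {x \<in> frontier E. \<not> ((\<exists>!\<nu>. outer_normal E x \<nu>) \<and>
          {y \<in> ball x (\<alpha>/2). y \<noteq> x \<and> (inverse (norm (x - y)) *\<^sub>R (x - y)) \<bullet> nu E x \<ge> \<alpha>} \<subseteq> E)}"
      using sub countable_subset by blast
    thus "H1_ae_on (frontier E) (\<lambda>x. (\<exists>!\<nu>. outer_normal E x \<nu>) \<and>
          {y \<in> ball x (\<alpha>/2). y \<noteq> x \<and> (inverse (norm (x - y)) *\<^sub>R (x - y)) \<bullet> nu E x \<ge> \<alpha>} \<subseteq> E)"
      unfolding H1_ae_on_def by (rule countable_H1_null)
  qed
qed

end
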